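(* Let $\mathbb{F}$ be a field and $\mathcal{J}Spin_n(\mathbb{F})$ the spin factor with basis $\mathcal{V}=\{\mathbf{1},s_1,\dots,s_n\}$, where $\{s_1,\dots,s_n\}$ is a spin system. For every 1-automorphism $\Phi$ of $\mathcal{J}Spin_n(\mathbb{F})$, the $(n+1)\times(n+1)$ matrix of the linear operator $\Phi$ with respect to $\mathcal{V}$ is symmetric.
   Context: $\mathcal{J}Spin_n(\mathbb{F})$ is the Jordan algebra with basis $\mathbf{1},s_1,\dots,s_n$ and product determined bilinearly by $\mathbf{1}$ being the identity, $s_is_i=\mathbf{1}$ and $s_is_j=0$ for $i\neq j$ (the spin system condition); equivalently $(\alpha\mathbf{1}+x)(\beta\mathbf{1}+y)=(\alpha\beta+f(x,y))\mathbf{1}+\beta x+\alpha y$ with $f(s_i,s_j)=\delta_{ij}$. A symmetry is an element $s$ with $s^2=\mathbf{1}$; for it $U_s(x)=2s(sx)-x$. A 1-automorphism is an automorphism $\Phi$ with $\Phi=U_s$ for some symmetry $s$. The matrix of a linear map $\psi$ with respect to the ordered basis $(v_1,\dots,v_{n+1})$ is $(x_{i,j})$ with $\psi(v_j)=\sum_i x_{i,j}v_i$. *)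

theory Defs
  imports Main
begin

text \<open>Elements of JSpin_n(F) are coordinate vectors v :: nat => 'a with respect to the
 ordered basis (1, s_1, ..., s_n): coordinate 0 is the coefficient of 1, coordinate i
 (1 <= i <= n) that of s_i; all coordinates beyond n are zero.\<close>

definition jspin_carrier :: "nat \<Rightarrow> (nat \<Rightarrow> 'a::field) set" where
  "jspin_carrier n = {v. \<forall>i>n. v i = 0}"

definition jspin_one :: "nat \<Rightarrow> 'a::field" where
  "jspin_one = (\<lambda>i. if i = 0 then 1 else 0)"

definition jspin_basis :: "nat \<Rightarrow> nat \<Rightarrow> 'a::field" where
  "jspin_basis j = (\<lambda>i. if i = j then 1 else 0)"

definition jspin_add :: "(nat \<Rightarrow> 'a::field) \<Rightarrow> (nat \<Rightarrow> 'a) \<Rightarrow> nat \<Rightarrow> 'a" where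
  "jspin_add v w = (\<lambda>i. v i + w i)"

definition jspin_smult :: "'a::field \<Rightarrow> (nat \<Rightarrow> 'a) \<Rightarrow> nat \<Rightarrow> 'a" where
  "jspin_smult c v = (\<lambda>i. c * v i)"

text \<open>(a 1 + x)(b 1 + y) = (a b + f(x,y)) 1 + b x + a y, with f(s_i,s_j) = delta_ij.\<close>
definition jspin_mult :: "nat \<Rightarrow> (nat \<Rightarrow> 'a::field) \<Rightarrow> (nat \<Rightarrow> 'a) \<Rightarrow> nat \<Rightarrow> 'a" where
  "jspin_mult n v w = (\<lambda>i. if i = 0 then v 0 * w 0 + (\<Sum>k=1..n. v k * w k)
                         else if i \<le> n then w 0 * v i + v 0 * w i else 0)"

definition jspin_automorphism :: "nat \<Rightarrow> ((nat \<Rightarrow> 'a::field) \<Rightarrow> nat \<Rightarrow> 'a) \<Rightarrow> bool" where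
  "jspin_automorphism n \<Phi> \<longleftrightarrow>
     bij_betw \<Phi> (jspin_carrier n) (jspin_carrier n) \<and>
     (\<forall>v\<in>jspin_carrier n. \<forall>w\<in>jspin_carrier n. \<Phi> (jspin_add v w) = jspin_add (\<Phi> v) (\<Phi> w)) \<and>
     (\<forall>c. \<forall>v\<in>jspin_carrier n. \<Phi> (jspin_smult c v) = jspin_smult c (\<Phi> v)) \<and>
     (\<forall>v\<in>jspin_carrier n. \<forall>w\<in>jspin_carrier n.
         \<Phi> (jspin_mult n v w) = jspin_mult n (\<Phi> v) (\<Phi> w))"

definition jspin_symmetry :: "nat \<Rightarrow> (nat \<Rightarrow> 'a::field) \<Rightarrow> bool" where
  "jspin_symmetry n s \<longleftrightarrow> s \<in> jspin_carrier n \<and> jspin_mult n s s = jspin_one"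

definition jspin_U :: "nat \<Rightarrow> (nat \<Rightarrow> 'a::field) \<Rightarrow> (nat \<Rightarrow> 'a) \<Rightarrow> nat \<Rightarrow> 'a" where
  "jspin_U n s x = (\<lambda>i. 2 * jspin_mult n s (jspin_mult n s x) i - x i)"

definition jspin_1_automorphism :: "nat \<Rightarrow> ((nat \<Rightarrow> 'a::field) \<Rightarrow> nat \<Rightarrow> 'a) \<Rightarrow> bool" where
  "jspin_1_automorphism n \<Phi> \<longleftrightarrow> jspin_automorphism n \<Phi> \<and>
     (\<exists>s. jspin_symmetry n s \<and> (\<forall>x\<in>jspin_carrier n. \<Phi> x = jspin_U n s x))"

text \<open>Matrix entry x_{i,j} of Phi w.r.t. the basis (1, s_1, ..., s_n), indices 0..n:
  Phi(v_j) = sum_i x_{i,j} v_i.\<close>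
definition jspin_matrix :: "((nat \<Rightarrow> 'a::field) \<Rightarrow> nat \<Rightarrow> 'a) \<Rightarrow> nat \<Rightarrow> nat \<Rightarrow> 'a" where
  "jspin_matrix \<Phi> i j = \<Phi> (jspin_basis j) i"

end

theory Submission
  imports Defs
begin

lemma sum_basis:
  "(\<Sum>k=1..n. s k * jspin_basis j k) = (if 1 \<le> j \<and> j \<le> n then s j else (0::'a::field))"
proof -
  have "(\<Sum>k=1..n. s k * jspin_basis j k) = (\<Sum>k=1..n. if j = k then s k else 0)"
    by (rule sum.cong) (auto simp: jspin_basis_def)
  then show ?thesis by (simp add: sum.delta)
qed

lemma sum_basis2:
  "(\<Sum>k=1..n. jspin_basis j k * s k) = (if 1 \<le> j \<and> j \<le> n then s j else (0::'a::field))"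
proof -
  have "(\<Sum>k=1..n. jspin_basis j k * s k) = (\<Sum>k=1..n. if j = k then s k else 0)"
    by (rule sum.cong) (auto simp: jspin_basis_def)
  then show ?thesis by (simp add: sum.delta)
qed

lemma sum_basis3:
  "(\<Sum>k=1..n. s k * (c * s k + d * jspin_basis j k)) =
     c * (\<Sum>k=1..n. s k * s k) + d * (if 1 \<le> j \<and> j \<le> n then s j else (0::'a::field))"
proof -
  have "(\<Sum>k=1..n. s k * (c * s k + d * jspin_basis j k)) =
     (\<Sum>k=1..n. c * (s k * s k) + d * (s k * jspin_basis j k))"
    by (rule sum.cong) (auto simp: algebra_simps)
  also have "\<dots> = c * (\<Sum>k=1..n. s k * s k) + d * (\<Sum>k=1..n. s k * jspin_basis j k)"
    by (simp add: sum.distrib sum_distrib_left)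
  finally show ?thesis by (simp only: sum_basis)
qed

lemma basis_carrier: "j \<le> n \<Longrightarrow> jspin_basis j \<in> jspin_carrier n"
  unfolding jspin_basis_def jspin_carrier_def by auto

lemma U_basis:
  fixes s :: "nat \<Rightarrow> 'a::field"
  assumes "i \<le> n" "j \<le> n"
  shows "jspin_U n s (jspin_basis j) i =
     (if i = 0 \<and> j = 0 then 2 * (s 0 * s 0 + (\<Sum>k=1..n. s k * s k)) - 1
      else if i = 0 then 4 * s 0 * s j
      else if j = 0 then 4 * s 0 * s i
      else 2 * (s i * s j + (if i = j then s 0 * s 0 else 0)) - (if i = j then 1 else 0))"
proof -
  have b0: "jspin_basis j 0 = (if j = 0 then 1 else (0::'a))" by (simp add: jspin_basis_def)
  have sx: "jspin_mult n s (jspin_basis j) = (\<lambda>k. if k = 0 then s 0 * jspin_basis j 0 + (if 1 \<le> j \<and> j \<le> n then s j else 0)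
        else if k \<le> n then jspin_basis j 0 * s k + s 0 * jspin_basis j k else 0)"
    unfolding jspin_mult_def sum_basis by simp
  show ?thesis
    using assms
    apply (cases "i = 0"; cases "j = 0")
       apply (simp_all add: jspin_U_def sx b0)
       apply (simp_all add: jspin_mult_def sum_basis3[simplified] sum_basis[simplified])
       apply (simp_all add: jspin_basis_def algebra_simps)
    done
qed


theorem theorem4p3:
  fixes n :: nat and \<Phi> :: "(nat \<Rightarrow> 'a::field) \<Rightarrow> nat \<Rightarrow> 'a"
  assumes "jspin_1_automorphism n \<Phi>"
  shows "\<forall>i\<le>n. \<forall>j\<le>n. jspin_matrix \<Phi> i j = jspin_matrix \<Phi> j i"
proof (intro allI impI)
  fix i j assume ij: "i \<le> n" "j \<le> n"
  from assms obtain s where U: "\<forall>x\<in>jspin_carrier n. \<Phi> x = jspin_U n s x"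
    unfolding jspin_1_automorphism_def by blast
  have "jspin_matrix \<Phi> i j = jspin_U n s (jspin_basis j) i"
    unfolding jspin_matrix_def using bspec[OF U basis_carrier[OF ij(2)]] by (rule fun_cong)
  moreover have "jspin_matrix \<Phi> j i = jspin_U n s (jspin_basis i) j"
    unfolding jspin_matrix_def using bspec[OF U basis_carrier[OF ij(1)]] by (rule fun_cong)
  ultimately show "jspin_matrix \<Phi> i j = jspin_matrix \<Phi> j i"
    using ij by (simp add: U_basis mult.commute)
qed

end
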